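(* Let $\lambda>1/2$. There exists a probability measure $\nu_\lambda$ supported on $[-2,2]$ such that for all real $z>2$ $$\int_{\mathbb{R}}\frac{\nu_\lambda(dx)}{z-x}=\frac{G(z)^{1-1/(2\lambda)}}{(z-2)^{1/(2\lambda)}},$$ and $\nu_\lambda$ is absolutely continuous with density proportional to $$\sin\!\Big[\Big(1-\frac1{2\lambda}\Big)\Big(\arcsin\frac x2+\frac\pi2\Big)\Big]\,(2-x)^{-1/(2\lambda)}\,\mathbf 1_{(-2,2)}(x).$$
   Context: $G(z)=\frac{z-\sqrt{z^2-4}}{2}$ is the Cauchy–Stieltjes transform of the standard Wigner law on $[-2,2]$ (positive for real $z>2$). *)

theory Defs
  imports "HOL-Probability.Probability"
begin

text \<open>Cauchy--Stieltjes transform of the standard Wigner (semicircle) law, for real z > 2.\<close>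
definition wignerG :: "real \<Rightarrow> real" where
  "wignerG z = (z - sqrt (z^2 - 4)) / 2"

definition nu_dens :: "real \<Rightarrow> real \<Rightarrow> real" where
  "nu_dens lam x =
     (if x \<in> {-2<..<2}
      then sin ((1 - 1 / (2 * lam)) * (arcsin (x / 2) + pi / 2)) * (2 - x) powr (- 1 / (2 * lam))
      else 0)"

end

theory Submission
  imports Defs
begin

definition Psi :: "real \<Rightarrow> real \<Rightarrow> real \<Rightarrow> real" where
 "Psi a r t = Im (complex_of_real r * cis t * (1 + complex_of_real r * cis t) powr complex_of_real (-2*a))"

definition bco :: "real \<Rightarrow> nat \<Rightarrow> real" where "bco a n = (-2*a) gchoose n"

lemma psi_sums:
  assumes "0 \<le> r" "r < 1"
  shows "(\<lambda>n. bco a n * r^Suc n * sin (real (Suc n) * t)) sums Psi a r t"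
proof -
  define z where "z = complex_of_real r * cis t"
  have nz: "norm z < 1" using assms by (simp add: z_def norm_mult)
  from gen_binomial_complex[OF nz, of "complex_of_real (-2*a)"]
  have "(\<lambda>n. (complex_of_real (-2*a) gchoose n) * z^n) sums (1+z) powr complex_of_real (-2*a)" .
  from sums_mult[OF this, of z]
  have "(\<lambda>n. z * ((complex_of_real (-2*a) gchoose n) * z^n)) sums (z * (1+z) powr complex_of_real (-2*a))" .
  from sums_Im[OF this]
  have *: "(\<lambda>n. Im (z * ((complex_of_real (-2*a) gchoose n) * z^n))) sums Psi a r t"
    by (simp add: Psi_def z_def)
  have g: "(complex_of_real (-2*a) gchoose n) = complex_of_real (bco a n)" for n
    by (simp add: bco_def gbinomial_prod_rev)
  have zz: "z * z^n = complex_of_real (r^Suc n) * cis (real (Suc n) * t)" for n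
  proof -
    have "z * z^n = z^Suc n" by simp
    also have "\<dots> = complex_of_real (r^Suc n) * cis t ^ Suc n" unfolding z_def
      by (simp only: power_mult_distrib of_real_power)
    finally show ?thesis by (simp only: Complex.DeMoivre)
  qed
  have "Im (z * ((complex_of_real (-2*a) gchoose n) * z^n)) = bco a n * r^Suc n * sin (real (Suc n) * t)" for n
  proof -
    have "z * ((complex_of_real (-2*a) gchoose n) * z^n) = complex_of_real (bco a n) * (z * z^n)"
      unfolding g by simp
    also have "\<dots> = complex_of_real (bco a n * r^Suc n) * cis (real (Suc n) * t)"
      by (simp add: zz)
    finally show ?thesis by simp
  qed
  with * show ?thesis by simp
qed


lemma lbint_0pi: "(LBINT t=ereal 0..ereal pi. f t) = set_lebesgue_integral lborel {0<..<pi} f"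
  unfolding interval_lebesgue_integral_def einterval_eq_Icc by simp

lemma cont_set_integrable:
  fixes f :: "real \<Rightarrow> real"
  assumes "continuous_on {0..pi} f"
  shows "set_integrable lborel {0<..<pi} f"
  by (rule set_integrable_subset[OF borel_integrable_atLeastAtMost'[OF assms]]) auto

lemma orth:
  assumes "m \<ge> 1" "k \<ge> 1"
  shows "set_lebesgue_integral lborel {0<..<pi} (\<lambda>t. sin (real m * t) * sin (real k * t))
        = (if m = k then pi/2 else 0)"
proof -
  have prod: "sin (real m * t) * sin (real k * t) = (cos ((real m - real k) * t) - cos ((real m + real k) * t)) / 2" for t
    by (simp add: cos_diff cos_add algebra_simps left_diff_distrib distrib_right)
  show ?thesis
  proof (cases "m = k")
    case True
    define F where "F t = t/2 - sin (2 * real k * t) / (4 * real k)" for t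
    have "(LBINT t=ereal 0..ereal pi. sin (real m * t) * sin (real k * t)) = F pi - F 0"
    proof (rule interval_integral_FTC_finite)
      show "continuous_on {min 0 pi..max 0 pi} (\<lambda>t. sin (real m * t) * sin (real k * t))"
        by (intro continuous_intros)
      fix x
      have "(F has_real_derivative (1/2 - cos (2 * real k * x) * (2 * real k) / (4 * real k))) (at x)"
        unfolding F_def by (auto intro!: derivative_eq_intros)
      moreover have "1/2 - cos (2 * real k * x) * (2 * real k) / (4 * real k) = sin (real m * x) * sin (real k * x)"
      proof -
        have "cos (2 * (real k * x)) = 1 - 2 * (sin (real k * x))^2" by (rule cos_double_sin)
        then show ?thesis using assms True by (simp add: field_simps power2_eq_square)
      qed
      ultimately show "(F has_vector_derivative sin (real m * x) * sin (real k * x)) (at x within {min 0 pi..max 0 pi})"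
        by (simp add: has_real_derivative_iff_has_vector_derivative has_vector_derivative_at_within)
    qed
    moreover have "F pi - F 0 = pi / 2"
      using sin_npi[of "2*k"] by (simp add: F_def mult.commute mult.left_commute)
    ultimately show ?thesis using True by (simp add: lbint_0pi)
  next
    case False
    define d where "d = real m - real k"
    define s where "s = real m + real k"
    have d0: "d \<noteq> 0" using False by (simp add: d_def)
    have s0: "s \<noteq> 0" using assms by (simp add: s_def)
    define F where "F t = sin (d * t) / (2 * d) - sin (s * t) / (2 * s)" for t
    have "(LBINT t=ereal 0..ereal pi. sin (real m * t) * sin (real k * t)) = F pi - F 0"
    proof (rule interval_integral_FTC_finite)
      show "continuous_on {min 0 pi..max 0 pi} (\<lambda>t. sin (real m * t) * sin (real k * t))"
        by (intro continuous_intros)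
      fix x
      have "(F has_real_derivative (cos (d * x) * d / (2 * d) - cos (s * x) * s / (2 * s))) (at x)"
        unfolding F_def by (auto intro!: derivative_eq_intros)
      moreover have "cos (d * x) * d / (2 * d) - cos (s * x) * s / (2 * s) = sin (real m * x) * sin (real k * x)"
      proof -
        have "cos (d * x) * d / (2 * d) - cos (s * x) * s / (2 * s) = (cos (d * x) - cos (s * x)) / 2"
          using d0 s0 by (simp add: field_simps)
        also have "\<dots> = sin (real m * x) * sin (real k * x)"
          by (simp only: prod d_def s_def)
        finally show ?thesis .
      qed
      ultimately show "(F has_vector_derivative sin (real m * x) * sin (real k * x)) (at x within {min 0 pi..max 0 pi})"
        by (simp add: has_real_derivative_iff_has_vector_derivative has_vector_derivative_at_within)
    qed
    moreover have "sin (d * pi) = 0"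
    proof (cases "m \<ge> k")
      case True then have "d = real (m - k)" by (simp add: d_def)
      then show ?thesis by (simp add: sin_npi)
    next
      case False then have "d = - real (k - m)" by (simp add: d_def)
      then show ?thesis by (simp add: sin_npi)
    qed
    moreover have "sin (s * pi) = 0" unfolding s_def using sin_npi[of "m+k"] by simp
    ultimately show ?thesis using False by (simp add: lbint_0pi F_def)
  qed
qed

lemma int_bound:
  fixes f :: "real \<Rightarrow> real"
  assumes "integrable lborel f" "\<And>t. norm (f t) \<le> indicator {0<..<pi} t * c"
  shows "(\<integral>t. norm (f t) \<partial>lborel) \<le> c * pi"
proof -
  have i: "integrable lborel (\<lambda>t. indicator {0<..<pi} t * c)"
    by (intro integrable_mult_left integrable_real_indicator) auto
  have "(\<integral>t. norm (f t) \<partial>lborel) \<le> (\<integral>t. indicator {0<..<pi} t * c \<partial>lborel)"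
    by (intro integral_mono integrable_norm assms i)
  also have "\<dots> = c * pi" by simp
  finally show ?thesis .
qed

lemma bco_abs_summable:
  assumes "0 \<le> r" "r < 1"
  shows "summable (\<lambda>n. \<bar>bco a n\<bar> * r^n)"
proof -
  have "summable (\<lambda>n. bco a n * ((1+r)/2)^n)"
    using gen_binomial_real[of "(1+r)/2" "-2*a"] assms by (auto simp: bco_def sums_iff)
  from powser_insidea[OF this, of r] assms have "summable (\<lambda>n. \<bar>bco a n * r^n\<bar>)" by simp
  then show ?thesis using assms by (simp add: abs_mult)
qed

lemma psi_moment_r:
  assumes "0 \<le> r" "r < 1" "k \<ge> 1"
  shows "set_lebesgue_integral lborel {0<..<pi} (\<lambda>t. Psi a r t * sin (real k * t)) = bco a (k-1) * r^k * pi/2"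
proof -
  define S where "S = {0<..<pi::real}"
  define f where "f n t = indicator S t * (bco a n * r^Suc n * (sin (real (Suc n) * t) * sin (real k * t)))" for n t
  have sm: "summable (\<lambda>n. \<bar>bco a n\<bar> * r^Suc n)"
    using summable_mult[OF bco_abs_summable[OF assms(1,2)], of r] by (simp add: mult_ac)
  have fb: "norm (f n t) \<le> indicator S t * (\<bar>bco a n\<bar> * r^Suc n)" for n t
  proof -
    have "\<bar>sin (real (Suc n) * t) * sin (real k * t)\<bar> \<le> 1"
      by (simp add: abs_mult mult_le_one)
    then show ?thesis using assms unfolding f_def
      by (auto simp: indicator_def abs_mult intro!: mult_left_le)
  qed
  have int: "integrable lborel (f n)" for n
  proof -
    have "set_integrable lborel {0<..<pi} (\<lambda>t. bco a n * r^Suc n * (sin (real (Suc n) * t) * sin (real k * t)))"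
      by (intro cont_set_integrable continuous_intros)
    then show ?thesis unfolding set_integrable_def f_def S_def by simp
  qed
  have 1: "AE t in lborel. summable (\<lambda>n. norm (f n t))"
  proof (rule AE_I2)
    fix t
    show "summable (\<lambda>n. norm (f n t))"
      by (rule summable_comparison_test[OF _ summable_mult[OF sm, of "indicator S t"]]) (use fb in auto)
  qed
  have 2: "summable (\<lambda>n. \<integral>t. norm (f n t) \<partial>lborel)"
  proof (rule summable_comparison_test[OF _ summable_mult2[OF sm, of pi]])
    show "\<exists>N. \<forall>n\<ge>N. norm (\<integral>t. norm (f n t) \<partial>lborel) \<le> \<bar>bco a n\<bar> * r ^ Suc n * pi"
      using int_bound[OF int fb[unfolded S_def]] by (auto simp: integral_nonneg_AE)
  qed
  from sums_integral[OF int 1 2]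
  have A: "(\<lambda>n. integral\<^sup>L lborel (f n)) sums (\<integral>t. (\<Sum>n. f n t) \<partial>lborel)" .
  have "(\<lambda>n. f n t) sums (indicator S t * (Psi a r t * sin (real k * t)))" for t
    unfolding f_def using sums_mult[OF sums_mult2[OF psi_sums[OF assms(1,2), of a t], of "sin (real k * t)"], of "indicator S t"]
    by (simp add: mult_ac)
  then have "(\<Sum>n. f n t) = indicator S t * (Psi a r t * sin (real k * t))" for t
    by (simp add: sums_iff)
  then have B: "(\<integral>t. (\<Sum>n. f n t) \<partial>lborel) = set_lebesgue_integral lborel {0<..<pi} (\<lambda>t. Psi a r t * sin (real k * t))"
    by (simp add: set_lebesgue_integral_def S_def)
  have C: "integral\<^sup>L lborel (f n) = (if n = k - 1 then bco a n * r^Suc n * pi/2 else 0)" for n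
  proof -
    have "integral\<^sup>L lborel (f n) = bco a n * r^Suc n * set_lebesgue_integral lborel {0<..<pi} (\<lambda>t. sin (real (Suc n) * t) * sin (real k * t))"
      unfolding f_def S_def set_lebesgue_integral_def by (simp add: mult_ac)
    also have "\<dots> = (if n = k - 1 then bco a n * r^Suc n * pi/2 else 0)"
      using assms by (subst orth) auto
    finally show ?thesis .
  qed
  have "(\<lambda>n. integral\<^sup>L lborel (f n)) sums (bco a (k-1) * r^Suc (k-1) * pi/2)"
    unfolding C by (rule sums_single)
  with A B show ?thesis using assms by (simp add: sums_iff)
qed

lemma sin_k_bound:
  assumes "0 \<le> t" "t \<le> pi"
  shows "\<bar>sin (real k * t)\<bar> \<le> real k * sin t"
proof (induction k)
  case 0 then show ?case by simp
next
  case (Suc k)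
  have st: "0 \<le> sin t" using assms by (simp add: sin_ge_zero)
  have "sin (real (Suc k) * t) = sin (real k * t) * cos t + cos (real k * t) * sin t"
    by (simp add: distrib_right sin_add)
  also have "\<bar>\<dots>\<bar> \<le> \<bar>sin (real k * t)\<bar> * \<bar>cos t\<bar> + \<bar>cos (real k * t)\<bar> * sin t"
    using st by (simp add: abs_mult abs_triangle_ineq[THEN order_trans])
  also have "\<dots> \<le> \<bar>sin (real k * t)\<bar> + sin t"
    by (intro add_mono mult_left_le mult_left_le_one_le) (auto simp: st)
  also have "\<dots> \<le> real (Suc k) * sin t" using Suc by (simp add: distrib_right)
  finally show ?case .
qed

lemma cos_gt_m1: "0 < t \<Longrightarrow> t < pi \<Longrightarrow> -1 < cos t"
  using cos_monotone_0_pi[of t pi] by simp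

lemma psi_bound:
  assumes "0 \<le> a" "1/2 \<le> r" "r \<le> 1" "0 < t" "t < pi"
  shows "\<bar>Psi a r t\<bar> \<le> (1 + cos t) powr (-a)"
proof -
  define u where "u = 1 + complex_of_real r * cis t"
  have nu: "(cmod u)^2 = 1 + 2*r*cos t + r^2"
  proof -
    have "(cmod u)^2 = (1 + r * cos t)^2 + (r * sin t)^2" unfolding u_def by (simp add: cmod_power2)
    also have "\<dots> = 1 + 2*r*cos t + r^2"
      by (simp add: power_mult_distrib sin_squared_eq) (simp add: power2_eq_square algebra_simps)
    finally show ?thesis .
  qed
  have c: "-1 < cos t" using cos_gt_m1 assms by simp
  have h1: "(2*r - 1) * (-1) \<le> (2*r - 1) * cos t" using c assms by (intro mult_left_mono) auto
  have h2: "0 \<le> (r - 1) * (r - 1)" by simp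
  have le: "1 + cos t \<le> (cmod u)^2" unfolding nu using h1 h2
    by (simp add: algebra_simps power2_eq_square)
  have pos: "0 < 1 + cos t" using c by simp
  have sq: "sqrt (1 + cos t) \<le> cmod u" using le by (simp add: real_sqrt_le_iff real_le_lsqrt)
  have "\<bar>Psi a r t\<bar> \<le> cmod (complex_of_real r * cis t * u powr complex_of_real (-2*a))"
    unfolding Psi_def u_def by (rule abs_Im_le_cmod)
  also have "\<dots> = r * cmod u powr (-2*a)"
    using assms by (simp add: norm_mult norm_powr_real_powr')
  also have "\<dots> \<le> 1 * sqrt (1 + cos t) powr (-2*a)"
    using assms pos sq by (intro mult_mono powr_mono2') auto
  also have "\<dots> = (1 + cos t) powr (-a)"
    using pos by (simp add: powr_half_sqrt[symmetric] powr_powr)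
  finally show ?thesis .
qed

lemma not_nonpos_Reals: "0 < Im z \<Longrightarrow> z \<notin> \<real>\<^sub>\<le>\<^sub>0"
  by (auto simp: nonpos_Reals_def)

lemma psi_tendsto:
  assumes "0 < t" "t < pi"
  shows "((\<lambda>r. Psi a r t) \<longlongrightarrow> Psi a 1 t) (at 1)"
proof -
  have nn: "1 + complex_of_real 1 * cis t \<notin> \<real>\<^sub>\<le>\<^sub>0"
    using assms by (intro not_nonpos_Reals) (simp add: sin_gt_zero)
  have "((\<lambda>r. complex_of_real r * cis t * (1 + complex_of_real r * cis t) powr complex_of_real (-2*a))
     \<longlongrightarrow> complex_of_real 1 * cis t * (1 + complex_of_real 1 * cis t) powr complex_of_real (-2*a)) (at 1)"
    by (intro tendsto_intros tendsto_powr_complex' disjI1 nn)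
  from tendsto_Im[OF this] show ?thesis unfolding Psi_def .
qed

lemma psi_cont_t:
  assumes "0 < r"
  shows "continuous_on {0<..<pi} (\<lambda>t. Psi a r t)"
proof -
  have "isCont (\<lambda>t. Psi a r t) x" if "0 < x" "x < pi" for x
  proof -
    have nn: "1 + complex_of_real r * cis x \<notin> \<real>\<^sub>\<le>\<^sub>0"
      using assms that by (intro not_nonpos_Reals) (simp add: sin_gt_zero)
    have "((\<lambda>t. complex_of_real r * cis t * (1 + complex_of_real r * cis t) powr complex_of_real (-2*a))
       \<longlongrightarrow> complex_of_real r * cis x * (1 + complex_of_real r * cis x) powr complex_of_real (-2*a)) (at x)"
      by (intro tendsto_intros tendsto_powr_complex' disjI1 nn)
    from tendsto_Im[OF this] show ?thesis unfolding Psi_def isCont_def .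
  qed
  then show ?thesis by (intro continuous_at_imp_continuous_on) auto
qed

lemma psi_at1:
  assumes "0 < t" "t < pi"
  shows "Psi a 1 t = sin ((1 - a) * t) * (2 + 2 * cos t) powr (-a)"
proof -
  define c where "c = 2 * cos (t/2)"
  have c0: "0 < c" unfolding c_def using assms by (intro mult_pos_pos cos_gt_zero_pi) auto
  have ct: "cos t = 2 * (cos (t/2))^2 - 1" using cos_double_cos[of "t/2"] by simp
  have st: "sin t = 2 * sin (t/2) * cos (t/2)" using sin_double[of "t/2"] by simp
  have e: "1 + cis t = complex_of_real c * cis (t/2)"
    by (simp add: complex_eq_iff c_def ct st power2_eq_square)
  have cp: "cis (t/2) powr complex_of_real (-2*a) = cis (-2*a*(t/2))"
  proof -
    have "cis (t/2) powr complex_of_real (-2*a) = exp (complex_of_real (-2*a) * Ln (cis (t/2)))"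
      by (simp add: powr_def)
    also have "Ln (cis (t/2)) = complex_of_real (t/2) * \<i>"
      using assms by (intro Ln_cis) auto
    also have "exp (complex_of_real (-2*a) * (complex_of_real (t/2) * \<i>)) = cis (-2*a*(t/2))"
      by (simp add: cis_conv_exp algebra_simps)
    finally show ?thesis .
  qed
  have p: "(1 + cis t) powr complex_of_real (-2*a) = complex_of_real (c powr (-2*a)) * cis (-2*a*(t/2))"
  proof -
    have "(complex_of_real c * cis (t/2)) powr complex_of_real (-2*a) = complex_of_real c powr complex_of_real (-2*a) * cis (t/2) powr complex_of_real (-2*a)"
      by (rule powr_times_real_left) (use c0 in auto)
    also have "complex_of_real c powr complex_of_real (-2*a) = complex_of_real (c powr (-2*a))"
      by (rule powr_of_real) (use c0 in simp)
    finally show ?thesis unfolding e cp .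
  qed
  have cc: "c powr (-2*a) = (2 + 2 * cos t) powr (-a)"
  proof -
    have "c powr (-2*a) = (c powr 2) powr (-a)" by (simp add: powr_powr)
    also have "c powr 2 = 2 + 2 * cos t" using c0 by (simp add: c_def ct power2_eq_square)
    finally show ?thesis .
  qed
  have "Psi a 1 t = Im (cis t * (1 + cis t) powr complex_of_real (-2*a))"
    unfolding Psi_def by simp
  also have "\<dots> = Im (cis t * (complex_of_real (c powr (-2*a)) * cis (-2*a*(t/2))))"
    by (simp only: p)
  also have "cis t * (complex_of_real (c powr (-2*a)) * cis (-2*a*(t/2))) = complex_of_real (c powr (-2*a)) * cis (t + -2*a*(t/2))"
    by (simp add: cis_mult mult.left_commute)
  also have "Im \<dots> = c powr (-2*a) * sin ((1 - a) * t)"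
    by (simp add: algebra_simps)
  finally show ?thesis using cc by simp
qed

lemma psi1_nonneg:
  assumes "0 < a" "a < 1" "0 < t" "t < pi"
  shows "0 \<le> Psi a 1 t"
proof -
  have "0 < sin ((1 - a) * t)"
    using assms by (intro sin_gt_zero) (auto intro: le_less_trans[of _ t] simp: mult_less_cancel_right1)
  then show ?thesis using psi_at1[OF assms(3,4)] by simp
qed

lemma dom_int:
  assumes "0 < a" "a < 1"
  shows "set_integrable lborel {0<..<pi} (\<lambda>t. (1 + cos t) powr (-a) * sin t)"
proof -
  define F where "F t = - ((1 + cos t) powr (1 - a)) / (1 - a)" for t
  have "set_integrable lborel (einterval (ereal 0) (ereal pi)) (\<lambda>t. (1 + cos t) powr (-a) * sin t)"
  proof (rule interval_integral_FTC_nonneg(1))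
    show "ereal 0 < ereal pi" by simp
    fix x assume x: "ereal 0 < ereal x" "ereal x < ereal pi"
    then have x': "0 < x" "x < pi" by auto
    then have p: "0 < 1 + cos x" using cos_gt_m1 by force
    have hf: "(1 + cos x) powr (1 - a) = (1 + cos x) powr (-a) * (1 + cos x)"
    proof -
      have "(1 + cos x) powr (1 - a) = (1 + cos x) powr (-a + 1)" by simp
      also have "\<dots> = (1 + cos x) powr (-a) * (1 + cos x) powr 1" by (rule powr_add)
      finally show ?thesis using p by simp
    qed
    show "DERIV F x :> (1 + cos x) powr (-a) * sin x"
      unfolding F_def using p assms by (auto intro!: derivative_eq_intros simp: hf)
    show "isCont (\<lambda>t. (1 + cos t) powr (-a) * sin t) x"
      using p by (intro continuous_intros) auto
  next
    show "AE x in lborel. ereal 0 < ereal x \<longrightarrow> ereal x < ereal pi \<longrightarrow> 0 \<le> (1 + cos x) powr (-a) * sin x"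
      by (intro AE_I2) (auto intro!: mult_nonneg_nonneg sin_ge_zero)
    show "((F \<circ> real_of_ereal) \<longlongrightarrow> F 0) (at_right (ereal 0))"
      unfolding ereal_tendsto_simps F_def using assms by (intro tendsto_intros) auto
    have c1: "0 \<le> 1 + cos x" for x :: real using cos_ge_minus_one[of x] by linarith
    have "((\<lambda>t. 1 + cos t) \<longlongrightarrow> 1 + cos pi) (at_left pi)" by (intro tendsto_intros)
    then have l0: "((\<lambda>t. 1 + cos t) \<longlongrightarrow> 0) (at_left pi)" by simp
    have "((\<lambda>t. (1 + cos t) powr (1 - a)) \<longlongrightarrow> 0) (at_left pi)"
      by (rule tendsto_zero_powrI[OF l0 tendsto_const always_eventually]) (use c1 assms in auto)
    then have "(F \<longlongrightarrow> - 0 / (1 - a)) (at_left pi)" unfolding F_def using assms by (intro tendsto_intros) auto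
    then show "((F \<circ> real_of_ereal) \<longlongrightarrow> 0) (at_left (ereal pi))"
      unfolding ereal_tendsto_simps by simp
  qed
  then show ?thesis by (simp add: einterval_eq_Icc)
qed


lemma psi_meas:
  assumes "0 < r" and that: "continuous_on {0<..<pi} g"
  shows "(\<lambda>t. indicator {0<..<pi} t * (Psi a r t * g t)) \<in> borel_measurable lborel"
proof -
  have "(\<lambda>t. indicator {0<..<pi} t *\<^sub>R (Psi a r t * g t)) \<in> borel_measurable borel"
    by (intro borel_measurable_continuous_on_indicator continuous_intros psi_cont_t assms that) auto
  then show ?thesis by simp
qed

lemma rr_facts:
  defines "rr \<equiv> (\<lambda>j::nat. 1 - inverse (real (Suc (Suc j))))"
  shows "\<And>j. 1/2 \<le> rr j" "\<And>j. rr j < 1" "rr \<longlonglongrightarrow> 1"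
proof -
  fix j
  have "inverse (real (Suc (Suc j))) \<le> 1/2" by (simp add: field_simps)
  then show "1/2 \<le> rr j" unfolding rr_def by simp
  show "rr j < 1" unfolding rr_def by simp
next
  have "(\<lambda>n. inverse (real (Suc (Suc n)))) \<longlonglongrightarrow> 0"
    by (intro LIMSEQ_Suc LIMSEQ_inverse_real_of_nat)
  from tendsto_diff[OF tendsto_const this, of 1]
  show "rr \<longlonglongrightarrow> 1" unfolding rr_def by simp
qed

lemma psi_moment_1:
  assumes "0 < a" "a < 1" "k \<ge> 1"
  shows "set_integrable lborel {0<..<pi} (\<lambda>t. Psi a 1 t * sin (real k * t))"
    and "set_lebesgue_integral lborel {0<..<pi} (\<lambda>t. Psi a 1 t * sin (real k * t)) = bco a (k-1) * pi/2"
proof -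
  define S where "S = {0<..<pi::real}"
  define rr where "rr = (\<lambda>j::nat. 1 - inverse (real (Suc (Suc j))))"
  have rrf: "\<And>j. 1/2 \<le> rr j" "\<And>j. rr j < 1" "rr \<longlonglongrightarrow> 1"
    unfolding rr_def by (rule rr_facts)+
  define s where "s j t = indicator S t * (Psi a (rr j) t * sin (real k * t))" for j t
  define f where "f t = indicator S t * (Psi a 1 t * sin (real k * t))" for t
  define w where "w t = real k * (indicator S t * ((1 + cos t) powr (-a) * sin t))" for t
  have cs: "continuous_on {0<..<pi} (\<lambda>t. sin (real k * t))" by (intro continuous_intros)
  have fm: "f \<in> borel_measurable lborel" unfolding f_def S_def by (rule psi_meas[OF _ cs]) simp
  have sm: "s j \<in> borel_measurable lborel" for j
    unfolding s_def S_def by (rule psi_meas[OF _ cs]) (use rrf(1)[of j] in linarith)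
  have wi: "integrable lborel w"
    unfolding w_def S_def using dom_int[OF assms(1,2)]
    by (intro integrable_mult_right) (simp add: set_integrable_def)
  have lim: "AE t in lborel. (\<lambda>j. s j t) \<longlonglongrightarrow> f t"
  proof (rule AE_I2)
    fix t
    show "(\<lambda>j. s j t) \<longlonglongrightarrow> f t"
    proof (cases "t \<in> S")
      case True
      then have t: "0 < t" "t < pi" by (auto simp: S_def)
      have "isCont (\<lambda>r. Psi a r t) 1" unfolding isCont_def by (rule psi_tendsto[OF t])
      from isCont_tendsto_compose[OF this rrf(3)]
      have "(\<lambda>j. Psi a (rr j) t) \<longlonglongrightarrow> Psi a 1 t" .
      then show ?thesis unfolding s_def f_def by (intro tendsto_intros)
    next
      case False then show ?thesis by (simp add: s_def f_def)
    qed
  qed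
  have bnd: "AE t in lborel. norm (s j t) \<le> w t" for j
  proof (rule AE_I2)
    fix t
    show "norm (s j t) \<le> w t"
    proof (cases "t \<in> S")
      case True
      then have t: "0 < t" "t < pi" by (auto simp: S_def)
      have "\<bar>Psi a (rr j) t\<bar> * \<bar>sin (real k * t)\<bar> \<le> (1 + cos t) powr (-a) * (real k * sin t)"
      proof (rule mult_mono)
        show "\<bar>Psi a (rr j) t\<bar> \<le> (1 + cos t) powr (-a)"
          using assms rrf(1)[of j] less_imp_le[OF rrf(2)[of j]] t by (intro psi_bound) auto
        show "\<bar>sin (real k * t)\<bar> \<le> real k * sin t"
          using t by (intro sin_k_bound) auto
      qed auto
      then show ?thesis using True by (simp add: s_def w_def abs_mult mult_ac)
    next
      case False then show ?thesis by (simp add: s_def w_def)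
    qed
  qed
  have fi: "integrable lborel f"
    by (rule integrable_dominated_convergence[OF fm sm wi lim bnd])
  have L: "(\<lambda>j. integral\<^sup>L lborel (s j)) \<longlonglongrightarrow> integral\<^sup>L lborel f"
    by (rule integral_dominated_convergence[OF fm sm wi lim bnd])
  have eq: "integral\<^sup>L lborel (s j) = (bco a (k-1) * pi/2) * rr j ^ k" for j
  proof -
    have "integral\<^sup>L lborel (s j) = set_lebesgue_integral lborel {0<..<pi} (\<lambda>t. Psi a (rr j) t * sin (real k * t))"
      by (simp add: s_def[abs_def] S_def set_lebesgue_integral_def)
    also have "\<dots> = bco a (k-1) * rr j ^ k * pi/2"
      using rrf(1,2)[of j] assms by (intro psi_moment_r) auto
    finally show ?thesis by simp
  qed
  have lp: "(\<lambda>j. rr j ^ k) \<longlonglongrightarrow> 1 ^ k" by (rule tendsto_power[OF rrf(3)])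
  have "(\<lambda>j. (bco a (k-1) * pi/2) * rr j ^ k) \<longlonglongrightarrow> (bco a (k-1) * pi/2) * 1 ^ k"
    by (rule tendsto_mult_left[OF lp])
  then have "(\<lambda>j. integral\<^sup>L lborel (s j)) \<longlonglongrightarrow> (bco a (k-1) * pi/2)"
    unfolding eq by simp
  from LIMSEQ_unique[OF L this] have "integral\<^sup>L lborel f = bco a (k-1) * pi/2" .
  then show "set_lebesgue_integral lborel {0<..<pi} (\<lambda>t. Psi a 1 t * sin (real k * t)) = bco a (k-1) * pi/2"
    by (simp add: f_def[abs_def] S_def set_lebesgue_integral_def)
  show "set_integrable lborel {0<..<pi} (\<lambda>t. Psi a 1 t * sin (real k * t))"
    using fi by (simp add: f_def[abs_def] S_def set_integrable_def)
qed

lemma ker_sums: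
  assumes "0 < w" "w < 1"
  shows "(\<lambda>k. (-2) * (-w)^(Suc k) * sin (real (Suc k) * t)) sums (2 * w * sin t / (1 + 2*w*cos t + w^2))"
proof -
  define z where "z = complex_of_real (-w) * cis t"
  have nz: "norm z < 1" using assms by (simp add: z_def norm_mult)
  have "(\<lambda>k. z^k) sums (1/(1-z))" by (rule geometric_sums[OF nz])
  from sums_mult[OF this, of z] have "(\<lambda>k. z * z^k) sums (z * (1/(1-z)))" .
  from sums_Im[OF this] have A: "(\<lambda>k. Im (z*z^k)) sums Im (z/(1-z))" by simp
  have tm: "Im (z*z^k) = (-w)^Suc k * sin (real (Suc k) * t)" for k
  proof -
    have "z * z^k = z^Suc k" by simp
    also have "\<dots> = complex_of_real ((-w)^Suc k) * cis t ^ Suc k" unfolding z_def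
      by (simp only: power_mult_distrib of_real_power)
    also have "\<dots> = complex_of_real ((-w)^Suc k) * cis (real (Suc k) * t)"
      by (simp only: Complex.DeMoivre)
    finally show ?thesis by simp
  qed
  have den: "(Re (1 - z))\<^sup>2 + (Im (1 - z))\<^sup>2 = 1 + 2*w*cos t + w^2"
  proof -
    have "(Re (1 - z))\<^sup>2 + (Im (1 - z))\<^sup>2 = (1 + w * cos t)^2 + (w * sin t)^2"
      by (simp add: z_def)
    also have "\<dots> = 1 + 2*w*cos t + w^2"
      by (simp add: power_mult_distrib sin_squared_eq) (simp add: power2_eq_square algebra_simps)
    finally show ?thesis .
  qed
  have num: "Im z * Re (1 - z) - Re z * Im (1 - z) = - w * sin t"
    by (simp add: z_def algebra_simps)
  have val: "Im (z/(1-z)) = - w * sin t / (1 + 2*w*cos t + w^2)"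
    by (simp only: Im_divide num den)
  from sums_mult[OF A, of "-2"]
  have "(\<lambda>k. -2 * Im (z*z^k)) sums (-2 * Im (z/(1-z)))" .
  then show ?thesis unfolding tm val by (simp add: mult.assoc)
qed


lemma summable_kw:
  assumes "0 < w" "w < 1"
  shows "summable (\<lambda>k. 2 * real (Suc k) * w^Suc k)"
proof -
  have "summable (\<lambda>n. w^n * real n)"
    using geometric_sums_times_n[of w] assms by (auto simp: sums_iff)
  then have "summable (\<lambda>n. w^Suc n * real (Suc n))" by (rule summable_Suc_iff[THEN iffD2])
  from summable_mult[OF this, of 2] have "summable (\<lambda>n. 2 * (w^Suc n * real (Suc n)))" .
  moreover have "(\<lambda>n. 2 * (w^Suc n * real (Suc n))) = (\<lambda>k. 2 * real (Suc k) * w^Suc k)"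
    by (rule ext) (simp only: mult_ac)
  ultimately show ?thesis by (simp only:)
qed

lemma theta_int:
  assumes "0 < a" "a < 1" "0 < w" "w < 1"
  shows "set_integrable lborel {0<..<pi} (\<lambda>t. Psi a 1 t * (2 * w * sin t / (1 + 2 * w * cos t + w^2)))"
    and "set_lebesgue_integral lborel {0<..<pi} (\<lambda>t. Psi a 1 t * (2 * w * sin t / (1 + 2 * w * cos t + w^2)))
           = pi * w * (1 - w) powr (-2*a)"
proof -
  define S where "S = {0<..<pi::real}"
  define F where "F k t = indicator S t * (Psi a 1 t * ((-2) * (-w)^(Suc k) * sin (real (Suc k) * t)))" for k t
  define D where "D t = indicator S t * ((1 + cos t) powr (-a) * sin t)" for t
  define c where "c k = 2 * real (Suc k) * w^Suc k" for k
  have sk: "summable c" unfolding c_def by (rule summable_kw[OF assms(3,4)])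
  have Di: "integrable lborel D" using dom_int[OF assms(1,2)] by (simp add: D_def[abs_def] S_def set_integrable_def)
  have Feq: "F k = (\<lambda>t. ((-2) * (-w)^(Suc k)) * (indicator S t * (Psi a 1 t * sin (real (Suc k) * t))))" for k
    by (rule ext) (simp add: F_def mult_ac)
  have Fi: "integrable lborel (F k)" for k
  proof -
    have "integrable lborel (\<lambda>t. indicator S t * (Psi a 1 t * sin (real (Suc k) * t)))"
      using psi_moment_1(1)[OF assms(1,2), of "Suc k"] by (simp add: S_def set_integrable_def)
    moreover have "F k = (\<lambda>t. ((-2) * (-w)^(Suc k)) * (indicator S t * (Psi a 1 t * sin (real (Suc k) * t))))"
      by (rule ext) (simp add: F_def mult_ac)
    ultimately show ?thesis by (simp only:) (rule integrable_mult_right)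
  qed
  have Fb: "norm (F k t) \<le> c k * D t" for k t
  proof (cases "t \<in> S")
    case True
    then have t: "0 < t" "t < pi" by (auto simp: S_def)
    have b1: "\<bar>Psi a 1 t\<bar> \<le> (1 + cos t) powr (-a)"
      using assms t by (intro psi_bound) auto
    have b2: "\<bar>sin (real (Suc k) * t)\<bar> \<le> real (Suc k) * sin t"
      using t by (intro sin_k_bound) auto
    have "\<bar>Psi a 1 t\<bar> * \<bar>sin (real (Suc k) * t)\<bar> \<le> (1 + cos t) powr (-a) * (real (Suc k) * sin t)"
      by (rule mult_mono[OF b1 b2]) auto
    then have "2 * w^Suc k * (\<bar>Psi a 1 t\<bar> * \<bar>sin (real (Suc k) * t)\<bar>) \<le> 2 * w^Suc k * ((1 + cos t) powr (-a) * (real (Suc k) * sin t))"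
      using assms by (intro mult_left_mono) auto
    moreover have "norm (F k t) = 2 * w^Suc k * (\<bar>Psi a 1 t\<bar> * \<bar>sin (real (Suc k) * t)\<bar>)"
      using True assms by (simp add: F_def abs_mult power_abs)
    moreover have "c k * D t = 2 * w^Suc k * ((1 + cos t) powr (-a) * (real (Suc k) * sin t))"
      using True by (simp add: D_def c_def)
    ultimately show ?thesis by simp
  next
    case False then show ?thesis by (simp add: F_def D_def)
  qed
  have D0: "0 \<le> D t" for t
  proof (cases "t \<in> S")
    case True then show ?thesis by (auto simp: D_def S_def intro!: sin_ge_zero mult_nonneg_nonneg)
  qed (simp add: D_def)
  have 1: "AE t in lborel. summable (\<lambda>k. norm (F k t))"
  proof (rule AE_I2)
    fix t
    show "summable (\<lambda>k. norm (F k t))"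
      by (rule summable_comparison_test[OF _ summable_mult2[OF sk, of "D t"]]) (use Fb in auto)
  qed
  have 2: "summable (\<lambda>k. \<integral>t. norm (F k t) \<partial>lborel)"
  proof (rule summable_comparison_test[OF _ summable_mult2[OF sk, of "integral\<^sup>L lborel D"]])
    have "norm (\<integral>t. norm (F k t) \<partial>lborel) \<le> c k * integral\<^sup>L lborel D" for k
    proof -
      have "norm (\<integral>t. norm (F k t) \<partial>lborel) = (\<integral>t. norm (F k t) \<partial>lborel)"
        by (simp add: integral_nonneg_AE)
      also have "\<dots> \<le> (\<integral>t. c k * D t \<partial>lborel)"
        by (intro integral_mono integrable_norm Fi integrable_mult_right Di Fb)
      also have "\<dots> = c k * integral\<^sup>L lborel D" by simp
      finally show ?thesis .
    qed
    then show "\<exists>N. \<forall>n\<ge>N. norm (\<integral>t. norm (F n t) \<partial>lborel) \<le> c n * integral\<^sup>L lborel D" by auto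
  qed
  have A: "(\<lambda>k. integral\<^sup>L lborel (F k)) sums (\<integral>t. (\<Sum>k. F k t) \<partial>lborel)"
    by (rule sums_integral[OF Fi 1 2])
  have I: "integrable lborel (\<lambda>t. (\<Sum>k. F k t))"
    by (rule integrable_suminf[OF Fi 1 2])
  have "(\<lambda>k. F k t) sums (indicator S t * (Psi a 1 t * (2 * w * sin t / (1 + 2 * w * cos t + w^2))))" for t
    unfolding F_def by (intro sums_mult ker_sums assms)
  then have SF: "(\<lambda>t. \<Sum>k. F k t) = (\<lambda>t. indicator S t * (Psi a 1 t * (2 * w * sin t / (1 + 2 * w * cos t + w^2))))"
    by (simp add: sums_iff)
  have IF: "integral\<^sup>L lborel (F k) = (-2) * (-w)^(Suc k) * (bco a k * pi/2)" for k
  proof -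
    have "integral\<^sup>L lborel (F k) = (-2) * (-w)^(Suc k) * set_lebesgue_integral lborel {0<..<pi} (\<lambda>t. Psi a 1 t * sin (real (Suc k) * t))"
      unfolding Feq integral_mult_right_zero by (simp add: S_def set_lebesgue_integral_def)
    also have "\<dots> = (-2) * (-w)^(Suc k) * (bco a k * pi/2)"
      using psi_moment_1(2)[OF assms(1,2), of "Suc k"] by simp
    finally show ?thesis .
  qed
  have "(\<lambda>n. bco a n * (-w)^n) sums (1 + -w) powr (-2*a)"
    using gen_binomial_real[of "-w" "-2*a"] assms by (simp add: bco_def)
  from sums_mult[OF this, of "pi * w"]
  have "(\<lambda>n. pi * w * (bco a n * (-w)^n)) sums (pi * w * (1 - w) powr (-2*a))" by simp
  moreover have "(\<lambda>n. pi * w * (bco a n * (-w)^n)) = (\<lambda>k. integral\<^sup>L lborel (F k))"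
    by (rule ext) (simp add: IF)
  ultimately have B: "(\<lambda>k. integral\<^sup>L lborel (F k)) sums (pi * w * (1 - w) powr (-2*a))" by simp
  show "set_integrable lborel {0<..<pi} (\<lambda>t. Psi a 1 t * (2 * w * sin t / (1 + 2 * w * cos t + w^2)))"
    using I unfolding SF by (simp add: S_def set_integrable_def)
  show "set_lebesgue_integral lborel {0<..<pi} (\<lambda>t. Psi a 1 t * (2 * w * sin t / (1 + 2 * w * cos t + w^2)))
           = pi * w * (1 - w) powr (-2*a)"
    using A B sums_unique2 unfolding SF by (fastforce simp: S_def set_lebesgue_integral_def)
qed


lemma nu_dens_nonneg:
  assumes "lam > 1/2"
  shows "0 \<le> nu_dens lam x"
proof (cases "x \<in> {-2<..<2}")
  case True
  then have b: "- (pi / 2) < arcsin (x/2)" "arcsin (x/2) < pi / 2"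
    using arcsin_lt_bounded[of "x/2"] by auto
  have l: "0 < 1 / (2 * lam)" "1 / (2 * lam) < 1" using assms by (auto simp: field_simps)
  have "0 \<le> sin ((1 - 1 / (2 * lam)) * (arcsin (x / 2) + pi / 2))"
  proof (rule sin_ge_zero)
    show "0 \<le> (1 - 1 / (2 * lam)) * (arcsin (x / 2) + pi / 2)" using b l by simp
    have "(1 - 1 / (2 * lam)) * (arcsin (x / 2) + pi / 2) \<le> arcsin (x / 2) + pi / 2"
      using mult_right_mono[of "1 - 1 / (2 * lam)" 1 "arcsin (x / 2) + pi / 2"] b l by simp
    then show "(1 - 1 / (2 * lam)) * (arcsin (x / 2) + pi / 2) \<le> pi" using b by linarith
  qed
  then show ?thesis using True by (simp add: nu_dens_def)
qed (auto simp: nu_dens_def)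

lemma nu_dens_meas: "nu_dens lam \<in> borel_measurable borel"
proof -
  define h where "h x = sin ((1 - 1 / (2 * lam)) * (arcsin (x / 2) + pi / 2)) * (2 - x) powr (- 1 / (2 * lam))" for x
  have "nu_dens lam = (\<lambda>x. indicator {-2<..<2} x *\<^sub>R h x)"
    by (rule ext) (simp add: nu_dens_def h_def indicator_def)
  moreover have "(\<lambda>x. indicator {-2<..<2} x *\<^sub>R h x) \<in> borel_measurable borel"
  proof (rule borel_measurable_continuous_on_indicator)
    show "continuous_on {-2<..<2} h" unfolding h_def
      by (intro continuous_intros continuous_on_arcsin) auto
  qed auto
  ultimately show ?thesis by simp
qed

lemma nu_dens_theta:
  assumes "lam > 1/2" "0 < t" "t < pi"
  shows "nu_dens lam (-2 * cos t) = Psi (1 / (2 * lam)) 1 t"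
proof -
  have c: "-1 < cos t" "cos t < 1" using cos_gt_m1[OF assms(2,3)] cos_monotone_0_pi[of 0 t] assms by auto
  have as: "arcsin (cos t) = pi/2 - t"
    using arcsin_sin[of "pi/2 - t"] assms by (simp add: sin_cos_eq)
  have "arcsin (-2 * cos t / 2) + pi / 2 = t"
    using arcsin_minus[of "cos t"] c as by simp
  then have "nu_dens lam (-2 * cos t) = sin ((1 - 1 / (2 * lam)) * t) * (2 + 2 * cos t) powr (- (1 / (2 * lam)))"
    using c by (simp add: nu_dens_def)
  also have "\<dots> = Psi (1 / (2 * lam)) 1 t" using psi_at1[OF assms(2,3)] by simp
  finally show ?thesis .
qed

lemma subst_theta:
  fixes g :: "real \<Rightarrow> real"
  assumes gm: "g \<in> borel_measurable borel" and g0: "\<And>x. x \<notin> {-2<..<2} \<Longrightarrow> g x = 0"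
  shows "(\<integral>\<^sup>+x. ennreal (g x) \<partial>lborel) = (\<integral>\<^sup>+t. ennreal (g (-2 * cos t) * (2 * sin t)) * indicator {0<..<pi} t \<partial>lborel)"
proof -
  have "(\<integral>\<^sup>+x. ennreal (g x) \<partial>lborel) = (\<integral>\<^sup>+x. ennreal (g x * indicator {-2 * cos 0..-2 * cos pi} x) \<partial>lborel)"
    by (intro nn_integral_cong) (auto simp: indicator_def g0)
  also have "\<dots> = (\<integral>\<^sup>+t. ennreal (g (-2 * cos t) * (2 * sin t) * indicator {0..pi} t) \<partial>lborel)"
  proof (rule nn_integral_substitution[where g="\<lambda>t. -2 * cos t" and a=0 and b=pi and g'="\<lambda>t. 2 * sin t"])
    show "set_borel_measurable borel {-2 * cos 0..-2 * cos pi} g"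
      unfolding set_borel_measurable_def using gm by measurable
    show "((\<lambda>t. -2 * cos t) has_real_derivative 2 * sin x) (at x)" for x
      by (auto intro!: derivative_eq_intros)
    show "continuous_on {0..pi} (\<lambda>t. 2 * sin t)" by (intro continuous_intros)
    show "x \<in> {0..pi} \<Longrightarrow> 0 \<le> 2 * sin x" for x by (auto intro!: sin_ge_zero)
  qed simp
  also have "\<dots> = (\<integral>\<^sup>+t. ennreal (g (-2 * cos t) * (2 * sin t)) * indicator {0<..<pi} t \<partial>lborel)"
  proof (intro nn_integral_cong)
    fix t :: real
    show "ennreal (g (-2 * cos t) * (2 * sin t) * indicator {0..pi} t) = ennreal (g (-2 * cos t) * (2 * sin t)) * indicator {0<..<pi} t"
    proof (cases "t = 0 \<or> t = pi")
      case True then show ?thesis using g0[of "-2"] g0[of 2] by auto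
    next
      case False then show ?thesis by (auto simp: indicator_def)
    qed
  qed
  finally show ?thesis .
qed

lemma wigner_facts:
  assumes "z > 2"
  shows "0 < wignerG z" "wignerG z < 1" "z = wignerG z + 1 / wignerG z"
proof -
  define s where "s = sqrt (z^2 - 4)"
  have z4: "4 < z^2" using assms power_strict_mono[of 2 z 2] by simp
  have s0: "0 \<le> s" "s^2 = z^2 - 4" using z4 by (auto simp: s_def)
  have "s < z" using assms s0 by (smt (verit) power2_eq_square power_mono)
  then show "0 < wignerG z" by (simp add: wignerG_def s_def[symmetric])
  have "z - 2 < s"
  proof (rule power2_less_imp_less)
    show "(z - 2)^2 < s^2" using s0 assms by (simp add: power2_eq_square algebra_simps)
  qed (use s0 in auto)
  then show "wignerG z < 1" by (simp add: wignerG_def s_def[symmetric])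
  have w: "wignerG z = (z - s) / 2" by (simp add: wignerG_def s_def)
  have "(z - s) / 2 * ((z - s) / 2) - z * ((z - s) / 2) + 1 = 0"
    using s0 by (simp add: field_simps power2_eq_square)
  moreover have "(z - s) / 2 \<noteq> 0" using \<open>s < z\<close> by simp
  ultimately show "z = wignerG z + 1 / wignerG z" unfolding w
    by (simp add: field_simps)
qed


lemma key_lemma:
  fixes g h :: "real \<Rightarrow> real"
  assumes gm: "g \<in> borel_measurable borel" and gnn: "\<And>x. 0 \<le> g x" and g0: "\<And>x. x \<notin> {-2<..<2} \<Longrightarrow> g x = 0"
    and gh: "\<And>t. 0 < t \<Longrightarrow> t < pi \<Longrightarrow> g (-2 * cos t) * (2 * sin t) = h t"
    and hi: "set_integrable lborel {0<..<pi} h" and hv: "set_lebesgue_integral lborel {0<..<pi} h = v"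
  shows "integrable lborel g \<and> integral\<^sup>L lborel g = v"
proof -
  have hnn: "0 \<le> indicator {0<..<pi} t * h t" for t
  proof (cases "t \<in> {0<..<pi}")
    case True
    then have t: "0 < t" "t < pi" by auto
    have "0 \<le> g (-2 * cos t) * (2 * sin t)" using gnn t by (auto intro!: mult_nonneg_nonneg sin_ge_zero)
    moreover have "g (-2 * cos t) * (2 * sin t) = h t" by (rule gh[OF t])
    ultimately have "0 \<le> h t" by (rule ord_le_eq_trans)
    then show ?thesis using True by simp
  qed simp
  have "(\<integral>\<^sup>+x. ennreal (g x) \<partial>lborel) = (\<integral>\<^sup>+t. ennreal (g (-2 * cos t) * (2 * sin t)) * indicator {0<..<pi} t \<partial>lborel)"
    by (rule subst_theta[OF gm g0])
  also have "\<dots> = (\<integral>\<^sup>+t. ennreal (indicator {0<..<pi} t * h t) \<partial>lborel)"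
  proof (intro nn_integral_cong)
    fix t
    show "ennreal (g (-2 * cos t) * (2 * sin t)) * indicator {0<..<pi} t = ennreal (indicator {0<..<pi} t * h t)"
    proof (cases "t \<in> {0<..<pi}")
      case True
      then have t: "0 < t" "t < pi" by auto
      show ?thesis unfolding gh[OF t] using True by simp
    qed simp
  qed
  also have "\<dots> = ennreal (\<integral>t. indicator {0<..<pi} t * h t \<partial>lborel)"
    by (rule nn_integral_eq_integral) (use hi hnn in \<open>auto simp: set_integrable_def\<close>)
  also have "(\<integral>t. indicator {0<..<pi} t * h t \<partial>lborel) = v" using hv by (simp add: set_lebesgue_integral_def)
  finally have nn: "(\<integral>\<^sup>+x. ennreal (g x) \<partial>lborel) = ennreal v" .
  have v0: "0 \<le> v" using hv hnn by (auto simp: set_lebesgue_integral_def intro!: integral_nonneg_AE)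
  have "g \<in> lborel \<rightarrow>\<^sub>M borel" using gm by simp
  from nn_integral_eq_integrable[OF this _ v0] nn gnn show ?thesis by auto
qed

theorem mainTheorem5:
  fixes lam :: real
  assumes "lam > 1/2"
  shows "\<exists>(\<nu> :: real measure) (c :: real).
           prob_space \<nu> \<and> sets \<nu> = sets borel \<and>
           measure \<nu> (UNIV - {-2..2}) = 0 \<and>
           (\<forall>z::real. z > 2 \<longrightarrow>
              integrable \<nu> (\<lambda>x. 1 / (z - x)) \<and>
              (\<integral>x. 1 / (z - x) \<partial>\<nu>) =
                wignerG z powr (1 - 1 / (2 * lam)) / (z - 2) powr (1 / (2 * lam))) \<and>
           c > 0 \<and>
           \<nu> = density lborel (\<lambda>x. ennreal (c * nu_dens lam x))"
proof -
  define a where "a = 1 / (2 * lam)"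
  have a01: "0 < a" "a < 1" using assms by (auto simp: a_def field_simps)
  define c where "c = 1 / pi"
  have c0: "0 < c" by (simp add: c_def)
  define d where "d x = c * nu_dens lam x" for x
  define \<nu> where "\<nu> = density lborel (\<lambda>x. ennreal (d x))"
  have dnn: "0 \<le> d x" for x using nu_dens_nonneg[OF assms] c0 by (simp add: d_def)
  have dm[measurable]: "d \<in> borel_measurable borel"
    unfolding d_def[abs_def] using nu_dens_meas by measurable
  have d0: "d x = 0" if "x \<notin> {-2<..<2}" for x using that by (auto simp: d_def nu_dens_def)
  have dth: "d (-2 * cos t) = c * Psi a 1 t" if "0 < t" "t < pi" for t
    using nu_dens_theta[OF assms that] by (simp add: d_def a_def)
  have mass: "integrable lborel d \<and> integral\<^sup>L lborel d = 1"
  proof (rule key_lemma[OF dm dnn d0])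
    show "d (-2 * cos t) * (2 * sin t) = (2 * c) * (Psi a 1 t * sin (real 1 * t))" if "0 < t" "t < pi" for t
      using dth[OF that] by simp
    show "set_integrable lborel {0<..<pi} (\<lambda>t. (2 * c) * (Psi a 1 t * sin (real 1 * t)))"
      using psi_moment_1(1)[OF a01, of 1] by (intro set_integrable_mult_right) auto
    show "set_lebesgue_integral lborel {0<..<pi} (\<lambda>t. (2 * c) * (Psi a 1 t * sin (real 1 * t))) = 1"
      using psi_moment_1(2)[OF a01, of 1] by (simp add: set_integral_mult_right bco_def c_def)
  qed
  have ps: "prob_space \<nu>"
  proof (rule prob_spaceI)
    have "emeasure \<nu> (space \<nu>) = (\<integral>\<^sup>+x. ennreal (d x) * indicator UNIV x \<partial>lborel)"
      unfolding \<nu>_def by (subst emeasure_density) auto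
    also have "\<dots> = (\<integral>\<^sup>+x. ennreal (d x) \<partial>lborel)" by simp
    also have "\<dots> = ennreal (integral\<^sup>L lborel d)"
      using mass dnn by (intro nn_integral_eq_integral) auto
    finally show "emeasure \<nu> (space \<nu>) = 1" using mass by simp
  qed
  have sets: "sets \<nu> = sets borel" by (simp add: \<nu>_def)
  have supp: "measure \<nu> (UNIV - {-2..2}) = 0"
  proof -
    have "emeasure \<nu> (UNIV - {-2..2}) = (\<integral>\<^sup>+x. ennreal (d x) * indicator (UNIV - {-2..2}) x \<partial>lborel)"
      unfolding \<nu>_def by (subst emeasure_density) auto
    also have "(\<lambda>x. ennreal (d x) * indicator (UNIV - {-2..2}) x) = (\<lambda>x. 0)"
    proof (rule ext)
      fix x
      show "ennreal (d x) * indicator (UNIV - {-2..2}) x = 0"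
      proof (cases "x \<in> {-2..2}")
        case False then have "d x = 0" by (intro d0) auto
        then show ?thesis by simp
      qed simp
    qed
    finally show ?thesis by (simp add: measure_def)
  qed
  have st: "integrable \<nu> (\<lambda>x. 1 / (z - x)) \<and>
              (\<integral>x. 1 / (z - x) \<partial>\<nu>) = wignerG z powr (1 - 1 / (2 * lam)) / (z - 2) powr (1 / (2 * lam))"
    if z: "z > 2" for z
  proof -
    define w where "w = wignerG z"
    note wf = wigner_facts[OF z, folded w_def]
    define g where "g x = d x / (z - x)" for x
    have gm: "g \<in> borel_measurable borel" unfolding g_def[abs_def] by measurable
    have g0: "g x = 0" if "x \<notin> {-2<..<2}" for x using d0[OF that] by (simp add: g_def)
    have gnn: "0 \<le> g x" for x
    proof (cases "x \<in> {-2<..<2}")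
      case True then show ?thesis using dnn[of x] z by (simp add: g_def)
    qed (simp add: g0)
    have K: "2 * sin t / (z + 2 * cos t) = 2 * w * sin t / (1 + 2 * w * cos t + w^2)" if "0 < t" "t < pi" for t
    proof -
      have e: "z + 2 * cos t = (1 + 2 * w * cos t + w^2) / w" using wf by (simp add: field_simps power2_eq_square)
      have D: "0 < 1 + 2 * w * cos t + w^2"
      proof -
        have "0 < (1 - w)^2" using wf by simp
        moreover have "-1 \<le> cos t" by simp
        then have "- (2 * w) \<le> 2 * w * cos t" using mult_left_mono[of "-1" "cos t" "2*w"] wf by simp
        ultimately show ?thesis by (simp add: power2_eq_square algebra_simps)
      qed
      show ?thesis unfolding e using D wf by (simp add: field_simps)
    qed
    have vv: "c * (pi * w * (1 - w) powr (-2*a)) = w * (1 - w) powr (-2*a)" by (simp add: c_def)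
    have gv: "integrable lborel g \<and> integral\<^sup>L lborel g = w * (1 - w) powr (-2*a)"
    proof (rule key_lemma[OF gm gnn g0])
      show "g (-2 * cos t) * (2 * sin t) = c * (Psi a 1 t * (2 * w * sin t / (1 + 2 * w * cos t + w^2)))"
        if "0 < t" "t < pi" for t
      proof -
        have "g (-2 * cos t) * (2 * sin t) = d (-2 * cos t) * (2 * sin t / (z + 2 * cos t))"
          by (simp add: g_def)
        also have "\<dots> = c * (Psi a 1 t * (2 * w * sin t / (1 + 2 * w * cos t + w^2)))"
          unfolding dth[OF that] K[OF that] by (simp only: mult.assoc)
        finally show ?thesis .
      qed
      show "set_integrable lborel {0<..<pi} (\<lambda>t. c * (Psi a 1 t * (2 * w * sin t / (1 + 2 * w * cos t + w^2))))"
        using theta_int(1)[OF a01 wf(1,2)] by (intro set_integrable_mult_right) auto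
      show "set_lebesgue_integral lborel {0<..<pi} (\<lambda>t. c * (Psi a 1 t * (2 * w * sin t / (1 + 2 * w * cos t + w^2)))) = w * (1 - w) powr (-2*a)"
      proof -
        have "set_lebesgue_integral lborel {0<..<pi} (\<lambda>t. c * (Psi a 1 t * (2 * w * sin t / (1 + 2 * w * cos t + w^2))))
            = c * set_lebesgue_integral lborel {0<..<pi} (\<lambda>t. Psi a 1 t * (2 * w * sin t / (1 + 2 * w * cos t + w^2)))"
          by (rule set_integral_mult_right)
        also have "\<dots> = c * (pi * w * (1 - w) powr (-2*a))" unfolding theta_int(2)[OF a01 wf(1,2)] ..
        finally show ?thesis using vv by simp
      qed
    qed
    have fm: "(\<lambda>x. 1 / (z - x)) \<in> borel_measurable lborel" by measurable
    have eqf: "(\<lambda>x. d x *\<^sub>R (1 / (z - x))) = g" by (rule ext) (simp add: g_def)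
    have I1: "integrable \<nu> (\<lambda>x. 1 / (z - x))"
      unfolding \<nu>_def using gv eqf by (subst integrable_density) (auto simp: dnn)
    have I2: "(\<integral>x. 1 / (z - x) \<partial>\<nu>) = w * (1 - w) powr (-2*a)"
      unfolding \<nu>_def using gv eqf by (subst integral_density) (auto simp: dnn)
    have "w * (1 - w) powr (-2*a) = w powr (1 - a) / (z - 2) powr a"
    proof -
      have z2: "z - 2 = (1 - w) powr 2 / w" using wf by (simp add: field_simps power2_eq_square)
      have P: "(z - 2) powr a = (1 - w) powr (2 * a) / w powr a"
      proof -
        have q: "(1 - w) powr 2 = (1 - w)^2" using wf by simp
        have "((1 - w)^2) powr a = (1 - w) powr (2 * a)"
          unfolding q[symmetric] by (simp add: powr_powr)
        then show ?thesis unfolding z2 using wf by (simp add: powr_divide)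
      qed
      have W: "w powr (1 - a) = w / w powr a" using wf by (simp add: powr_diff)
      have M: "(1 - w) powr (-2*a) = 1 / (1 - w) powr (2*a)"
        using powr_minus_divide[of "1 - w" "2*a"] by simp
      have R: "0 < w powr a" "0 < (1 - w) powr (2*a)" using wf by auto
      show ?thesis unfolding P W M using R by (simp add: field_simps)
    qed
    then show ?thesis using I1 I2 by (simp add: w_def a_def)
  qed
  show ?thesis
    by (rule exI[of _ \<nu>], rule exI[of _ c]) (use ps sets supp st c0 in \<open>simp add: \<nu>_def d_def\<close>)
qed

end
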